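(* Let $G=(V,E)$ be a finite simple undirected graph, $G_0:=G$, and let $W_1,\dots,W_r$ be distinct subsets of $V$ such that for every $t\in\{1,\dots,r\}$, $W_t$ is a clique of $G_{t-1}$ with $|W_t|\ge2$ and $G_t:=G_{t-1}\mid W_t$. Let $F_0:=STAB(G)$ and $F_t:=\{x\in STAB(G)\mid x_{W_j}=1,\ j=1,\dots,t\}$. Then for every $t\in\{1,\dots,r\}$, the inequality $x_{W_t}\le1$ is valid for $F_{t-1}$.
   Context: For a graph $G=(V,E)$, $\mathcal S(G)\subseteq\{0,1\}^V$ is the set of characteristic vectors of stable sets of $G$, and $STAB(G)=\mathrm{conv}\,\mathcal S(G)$. For $W\subseteq V$ and $x\in\mathbb R^V$, $x_W=\sum_{v\in W}x_v$. The clique projection of a clique $W$ ($|W|\ge2$) of a graph $H=(V,E_H)$ is $H\mid W=(V,E_H\cup\{uv\notin E_H\mid u\ne v,\ W\subseteq N_H(u)\cup N_H(v)\})$, where $N_H(u)$ is the neighborhood of $u$ in $H$. *)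

theory Defs
  imports "HOL-Analysis.Analysis"
begin

text \<open>A finite simple undirected graph on the vertex set UNIV of a finite type 'v is
  given by its edge set E, a set of 2-element vertex sets.\<close>

definition simple_graph :: "'v set set \<Rightarrow> bool" where
  "simple_graph E \<longleftrightarrow> (\<forall>e\<in>E. card e = 2)"

definition nbhd :: "'v set set \<Rightarrow> 'v \<Rightarrow> 'v set" where
  "nbhd E u = {v. {u, v} \<in> E}"

definition is_stable :: "'v set set \<Rightarrow> 'v set \<Rightarrow> bool" where
  "is_stable E S \<longleftrightarrow> (\<forall>u\<in>S. \<forall>v\<in>S. {u, v} \<notin> E)"

definition is_clique :: "'v set set \<Rightarrow> 'v set \<Rightarrow> bool" where
  "is_clique E W \<longleftrightarrow> (\<forall>u\<in>W. \<forall>v\<in>W. u \<noteq> v \<longrightarrow> {u, v} \<in> E)"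

definition char_vec :: "'v set \<Rightarrow> real ^ 'v" where
  "char_vec S = (\<chi> v. if v \<in> S then 1 else 0)"

definition stab_vecs :: "('v::finite) set set \<Rightarrow> (real ^ 'v) set" where
  "stab_vecs E = {char_vec S | S. is_stable E S}"

definition STAB :: "('v::finite) set set \<Rightarrow> (real ^ 'v) set" where
  "STAB E = convex hull (stab_vecs E)"

definition xsum :: "real ^ 'v \<Rightarrow> 'v set \<Rightarrow> real" where
  "xsum x W = (\<Sum>v\<in>W. x $ v)"

definition clique_proj :: "'v set set \<Rightarrow> 'v set \<Rightarrow> 'v set set" where
  "clique_proj E W = E \<union> {{u, v} | u v. {u, v} \<notin> E \<and> u \<noteq> v \<and> W \<subseteq> nbhd E u \<union> nbhd E v}"

end

theory Submission
  imports Defs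
begin

definition indep :: "'v set set \<Rightarrow> 'v set \<Rightarrow> bool" where
  "indep H S \<longleftrightarrow> (\<forall>a\<in>S. \<forall>b\<in>S. a \<noteq> b \<longrightarrow> {a, b} \<notin> H)"

definition supp :: "real ^ 'v \<Rightarrow> 'v set" where
  "supp y = {v. y $ v = 1}"

lemma supp_char: "supp (char_vec S) = S"
  unfolding supp_def char_vec_def by auto

lemma xsum_char:
  fixes S :: "('v::finite) set"
  shows "xsum (char_vec S) W = real (card (W \<inter> S))"
proof -
  have "xsum (char_vec S) W = (\<Sum>v\<in>W. if v \<in> S then 1 else 0)"
    unfolding xsum_def char_vec_def by simp
  also have "\<dots> = (\<Sum>v\<in>W \<inter> S. 1)"
    by (subst sum.inter_restrict) auto
  finally show ?thesis by simp
qed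

lemma indep_step:
  assumes "indep H S" "\<forall>a. {a} \<notin> H" "card (W \<inter> S) = 1"
  shows "indep (clique_proj H W) S"
  unfolding indep_def
proof (intro ballI impI notI)
  fix a b assume ab: "a \<in> S" "b \<in> S" "a \<noteq> b" "{a, b} \<in> clique_proj H W"
  obtain w where w: "W \<inter> S = {w}" using assms(3) card_1_singletonE by blast
  show False
  proof (cases "{a, b} \<in> H")
    case True then show ?thesis using assms(1) ab unfolding indep_def by blast
  next
    case False
    then obtain u v where uv: "{a,b} = {u,v}" "W \<subseteq> nbhd H u \<union> nbhd H v"
      using ab(4) unfolding clique_proj_def by blast
    have uS: "u \<in> S" "v \<in> S" using uv(1) ab by (metis doubleton_eq_iff)+
    have "w \<in> W" "w \<in> S" using w by auto
    then have "{u,w} \<in> H \<or> {v,w} \<in> H" using uv(2) unfolding nbhd_def by auto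
    then show False
    proof
      assume h: "{u,w} \<in> H"
      show False proof (cases "u = w")
        case True then show ?thesis using h assms(2) by auto
      next
        case False then show ?thesis using h assms(1) uS \<open>w \<in> S\<close> unfolding indep_def by blast
      qed
    next
      assume h: "{v,w} \<in> H"
      show False proof (cases "v = w")
        case True then show ?thesis using h assms(2) by auto
      next
        case False then show ?thesis using h assms(1) uS \<open>w \<in> S\<close> unfolding indep_def by blast
      qed
    qed
  qed
qed

lemma indep_clique:
  fixes S :: "('v::finite) set"
  assumes "indep H S" "is_clique H W"
  shows "card (W \<inter> S) \<le> 1"
proof -
  have "\<forall>a1\<in>W \<inter> S. \<forall>a2\<in>W \<inter> S. a1 = a2"
    using assms unfolding indep_def is_clique_def by blast
  then show ?thesis using card_le_Suc0_iff_eq[of "W \<inter> S"] by simp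
qed

theorem corollary1:
  fixes E :: "('v::finite) set set"
    and G :: "nat \<Rightarrow> 'v set set"
    and W :: "nat \<Rightarrow> 'v set"
    and r :: nat
  assumes "simple_graph E"
    and "G 0 = E"
    and "inj_on W {1..r}"
    and "\<And>t. t \<in> {1..r} \<Longrightarrow> is_clique (G (t - 1)) (W t)"
    and "\<And>t. t \<in> {1..r} \<Longrightarrow> card (W t) \<ge> 2"
    and "\<And>t. t \<in> {1..r} \<Longrightarrow> G t = clique_proj (G (t - 1)) (W t)"
  shows "\<forall>t\<in>{1..r}. \<forall>x\<in>{y \<in> STAB E. \<forall>j\<in>{1..t - 1}. xsum y (W j) = 1}.
           xsum x (W t) \<le> 1"
proof (intro ballI)
  have noloop: "\<forall>a. {a} \<notin> G j" if "j \<le> r" for j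
    using that
  proof (induction j)
    case 0 then show ?case using assms(1,2) unfolding simple_graph_def by force
  next
    case (Suc j)
    then have "G (Suc j) = clique_proj (G j) (W (Suc j))" using assms(6)[of "Suc j"] by simp
    then show ?case using Suc unfolding clique_proj_def by (auto simp: doubleton_eq_iff)
  qed
  fix t x
  assume t: "t \<in> {1..r}" and x: "x \<in> {y \<in> STAB E. \<forall>j\<in>{1..t - 1}. xsum y (W j) = 1}"
  define s where "s = stab_vecs E"
  have sfin: "finite s"
  proof -
    have "s = char_vec ` {S. is_stable E S}" unfolding s_def stab_vecs_def by auto
    then show ?thesis by simp
  qed
  obtain u where u: "\<forall>y\<in>s. 0 \<le> u y" "sum u s = 1" "(\<Sum>y\<in>s. u y *\<^sub>R y) = x"
    using x convex_hull_finite[OF sfin] unfolding STAB_def s_def by auto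
  have sv: "y = char_vec (supp y) \<and> is_stable E (supp y)" if "y \<in> s" for y
    using that unfolding s_def stab_vecs_def by (auto simp: supp_char)
  have xs: "xsum x A = (\<Sum>y\<in>s. u y * real (card (A \<inter> supp y)))" for A
  proof -
    have "xsum x A = (\<Sum>v\<in>A. \<Sum>y\<in>s. u y * y $ v)"
      unfolding u(3)[symmetric] xsum_def by simp
    also have "\<dots> = (\<Sum>y\<in>s. u y * xsum y A)"
      by (subst sum.swap) (simp add: xsum_def sum_distrib_left)
    also have "\<dots> = (\<Sum>y\<in>s. u y * real (card (A \<inter> supp y)))"
      by (rule sum.cong) (use sv xsum_char in metis)+
    finally show ?thesis .
  qed
  have key: "\<forall>y\<in>s. u y > 0 \<longrightarrow> indep (G j) (supp y)" if "j \<le> t - 1" for j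
    using that
  proof (induction j)
    case 0
    then show ?case using sv assms(2) unfolding indep_def is_stable_def by blast
  next
    case (Suc j)
    let ?k = "Suc j"
    have kr: "?k \<in> {1..r}" using Suc.prems t by auto
    have one: "xsum x (W ?k) = 1" using x Suc.prems by auto
    have cl: "is_clique (G j) (W ?k)" using assms(4)[OF kr] by simp
    define c where "c y = real (card (W ?k \<inter> supp y))" for y
    have le: "u y * c y \<le> u y" if "y \<in> s" for y
    proof (cases "u y > 0")
      case True
      then have "c y \<le> 1" using Suc.IH Suc.prems that indep_clique[OF _ cl] unfolding c_def by force
      then show ?thesis using True by (simp add: mult_le_cancel_left1)
    next
      case False then show ?thesis using u(1) that by force
    qed
    have "(\<Sum>y\<in>s. u y - u y * c y) = 0"
      using one xs[of "W ?k"] u(2) unfolding c_def by (simp add: sum_subtractf)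
    then have z: "\<forall>y\<in>s. u y - u y * c y = 0"
    proof -
      have "\<forall>y\<in>s. 0 \<le> u y - u y * c y" using le by simp
      then show ?thesis using sum_nonneg_eq_0_iff[OF sfin, of "\<lambda>y. u y - u y * c y"] \<open>(\<Sum>y\<in>s. u y - u y * c y) = 0\<close> by blast
    qed
    show ?case
    proof (intro ballI impI)
      fix y assume y: "y \<in> s" "u y > 0"
      then have "c y = 1" using z by force
      then have "card (W ?k \<inter> supp y) = 1" unfolding c_def by simp
      moreover have "indep (G j) (supp y)" using Suc y by simp
      ultimately have "indep (clique_proj (G j) (W ?k)) (supp y)"
        using indep_step noloop[of j] kr by auto
      then show "indep (G ?k) (supp y)" using assms(6)[OF kr] by simp
    qed
  qed
  have "u y * real (card (W t \<inter> supp y)) \<le> u y" if "y \<in> s" for y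
  proof (cases "u y > 0")
    case True
    have "card (W t \<inter> supp y) \<le> 1"
      using key[of "t - 1"] True that indep_clique assms(4)[OF t] by blast
    then show ?thesis using True by (simp add: mult_le_cancel_left1)
  next
    case False then show ?thesis using u(1) that by force
  qed
  then have "xsum x (W t) \<le> sum u s" unfolding xs by (rule sum_mono)
  then show "xsum x (W t) \<le> 1" using u(2) by simp
qed

end
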